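(* The $d\times(d-1)$ matrix $B=M^+\bigl((F'_p)^2\bigr)-M^+(F)\bigl(M^-(F)\bigr)^{-1}M^-\bigl((F'_p)^2\bigr)$ is expressed in terms of the coefficients $a_i$ alone (without their derivatives) and has maximal rank $d-1$ (at every point of $U$).
   Context: Let $d\ge 3$, let $U\subset\mathbb{C}^2$ be open with coordinates $(x,y)$, and let $F(x,y,p)=\sum_{i=0}^d a_i(x,y)p^{d-i}$ with $a_i$ holomorphic on $U$, $a_0\equiv1$, such that $F(x,y,p)=\prod_{i=1}^d(p-p_i(x,y))$ with holomorphic $p_i$ pairwise distinct at every point of $U$. A polynomial $P=\sum_{i=0}^k g_ip^i$ with holomorphic coefficients is identified with the column vector $(g_0,\dots,g_k)^T$. For such $P$ (of formal degree $\le k$) and an integer $h\ge 0$, $M(P)$ denotes the $(h+k+1)\times(h+1)$ matrix of multiplication by $P$ from polynomials of degree $\le h$ to polynomials of degree $\le h+k$: its entry in row $i$, column $j$ (indices starting at $0$) is $g_{i-j}$ if $0\le i-j\le k$ and $0$ otherwise. Here $M(F)$ is taken of size $(3d-3)\times(2d-3)$ (i.e. $h=2d-4$) and $M((F'_p)^2)$ of size $(3d-3)\times(d-1)$ (i.e. $h=d-2$). For a matrix $X$ with $3d-3$ rows, $X^+$ denotes the submatrix formed by its first $d$ rows and $X^-$ the submatrix formed by its last $2d-3$ rows; $M^-(F)$ is triangular with ones on the diagonal, hence invertible. *)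

theory Defs
  imports "HOL-Analysis.Analysis" "HOL-Computational_Algebra.Polynomial"
    "Jordan_Normal_Form.DL_Rank" "Jordan_Normal_Form.Gauss_Jordan_Elimination"
begin

text \<open>Holomorphic functions of two complex variables on an open set of C^2 = complex \<times> complex:
  continuous and holomorphic in each variable separately (equivalent to joint
  complex differentiability by Osgood's lemma).\<close>
definition holo2 :: "(complex \<times> complex) set \<Rightarrow> (complex \<times> complex \<Rightarrow> complex) \<Rightarrow> bool" where
  "holo2 U f \<longleftrightarrow> continuous_on U f \<and>
     (\<forall>x y. (x, y) \<in> U \<longrightarrow>
        (\<lambda>t. f (t, y)) field_differentiable at x \<and> (\<lambda>t. f (x, t)) field_differentiable at y)"

definition Fpoly :: "nat \<Rightarrow> (nat \<Rightarrow> complex) \<Rightarrow> complex poly" where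
  "Fpoly d c = (\<Sum>i\<le>d. monom (c i) (d - i))"

text \<open>Matrix of multiplication by P (formal degree \<le> k) from polynomials of degree \<le> h
  to polynomials of degree \<le> h + k; entry (i,j) is coeff P (i-j) if 0 \<le> i-j \<le> k.\<close>
definition Mmat :: "nat \<Rightarrow> nat \<Rightarrow> complex poly \<Rightarrow> complex mat" where
  "Mmat k h P = mat (h + k + 1) (h + 1)
     (\<lambda>(i, j). if j \<le> i \<and> i - j \<le> k then coeff P (i - j) else 0)"

definition upper :: "nat \<Rightarrow> complex mat \<Rightarrow> complex mat" where
  "upper d X = mat d (dim_col X) (\<lambda>(i, j). X $$ (i, j))"

definition lower :: "nat \<Rightarrow> complex mat \<Rightarrow> complex mat" where
  "lower d X = mat (2 * d - 3) (dim_col X) (\<lambda>(i, j). X $$ (i + d, j))"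

definition MF :: "nat \<Rightarrow> (nat \<Rightarrow> complex) \<Rightarrow> complex mat" where
  "MF d c = Mmat d (2 * d - 4) (Fpoly d c)"

definition MFp2 :: "nat \<Rightarrow> (nat \<Rightarrow> complex) \<Rightarrow> complex mat" where
  "MFp2 d c = Mmat (2 * d - 2) (d - 2) ((pderiv (Fpoly d c))\<^sup>2)"

definition Bmat :: "nat \<Rightarrow> (nat \<Rightarrow> complex) \<Rightarrow> complex mat" where
  "Bmat d c = upper d (MFp2 d c)
     - upper d (MF d c) * the (mat_inverse (lower d (MF d c))) * lower d (MFp2 d c)"

end

theory Submission
  imports Defs
begin


definition pv :: "nat \<Rightarrow> complex vec \<Rightarrow> complex poly" where
  "pv n v = (\<Sum>j<n. monom (v $ j) j)"

lemma coeff_pv: "coeff (pv n v) i = (if i < n then v $ i else 0)"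
  unfolding pv_def by (simp add: coeff_sum coeff_monom)

lemma degree_pv: "degree (pv (Suc m) v) \<le> m"
  unfolding pv_def
  by (rule degree_sum_le) (auto intro: order.trans[OF degree_monom_le])

lemma Mmat_carrier: "Mmat k h P \<in> carrier_mat (h + k + 1) (h + 1)"
  unfolding Mmat_def by simp

lemma Mmat_mult:
  assumes P: "degree P \<le> k" and v: "v \<in> carrier_vec (h + 1)"
  shows "Mmat k h P *\<^sub>v v = vec (h + k + 1) (\<lambda>i. coeff (P * pv (h+1) v) i)"
proof (rule eq_vecI)
  show "dim_vec (Mmat k h P *\<^sub>v v) = dim_vec (vec (h + k + 1) (\<lambda>i. coeff (P * pv (h+1) v) i))"
    by (simp add: Mmat_def)
  fix i assume i: "i < dim_vec (vec (h + k + 1) (\<lambda>i. coeff (P * pv (h+1) v) i))"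
  hence i: "i < h + k + 1" by simp
  have "coeff (P * pv (h+1) v) i = (\<Sum>j<h+1. v $ j * (if j \<le> i then coeff P (i - j) else 0))"
    unfolding pv_def mult.commute[of P] sum_distrib_right coeff_sum
    by (intro sum.cong) (auto simp: coeff_monom_mult)
  also have "\<dots> = (\<Sum>j<h+1. (if j \<le> i \<and> i - j \<le> k then coeff P (i - j) else 0) * v $ j)"
    by (rule sum.cong) (auto intro!: coeff_eq_0 simp: not_le intro: le_less_trans[OF P])
  also have "\<dots> = (Mmat k h P *\<^sub>v v) $ i"
    using i v by (simp add: Mmat_def mult_mat_vec_def scalar_prod_def atLeast0LessThan)
  finally show "(Mmat k h P *\<^sub>v v) $ i = vec (h + k + 1) (\<lambda>i. coeff (P * pv (h+1) v) i) $ i"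
    using i by simp
qed

lemma upper_mult: assumes "A \<in> carrier_mat m n" "d \<le> m" "v \<in> carrier_vec n" "i < d"
  shows "(upper d A *\<^sub>v v) $ i = (A *\<^sub>v v) $ i"
  using assms by (simp add: upper_def mult_mat_vec_def scalar_prod_def row_def)

lemma lower_mult: assumes "A \<in> carrier_mat m n" "v \<in> carrier_vec n" "i < 2*d-3" "2*d-3+d \<le> m"
  shows "(lower d A *\<^sub>v v) $ i = (A *\<^sub>v v) $ (i + d)"
  using assms by (simp add: lower_def mult_mat_vec_def scalar_prod_def row_def)

lemma mult_unit_col: fixes A :: "complex mat" assumes "A \<in> carrier_mat n nc" "i < nc"
  shows "A *\<^sub>v unit_vec nc i = col A i"
  using assms by (intro eq_vecI) (auto simp: scalar_prod_right_unit[of i nc])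

lemma rank_of_trivial_kernel:
  fixes A :: "complex mat"
  assumes A: "A \<in> carrier_mat n nc"
    and ker: "\<And>v. v \<in> carrier_vec nc \<Longrightarrow> A *\<^sub>v v = 0\<^sub>v n \<Longrightarrow> v = 0\<^sub>v nc"
  shows "vec_space.rank n A = nc"
proof -
  have dist: "distinct (cols A)"
  proof (subst distinct_conv_nth, intro allI impI)
    fix i j assume i: "i < length (cols A)" and j: "j < length (cols A)" and ij: "i \<noteq> j"
    show "cols A ! i \<noteq> cols A ! j"
    proof
      assume eq: "cols A ! i = cols A ! j"
      have i': "i < nc" and j': "j < nc" using i j A by auto
      let ?v = "unit_vec nc i - unit_vec nc j :: complex vec"
      have "A *\<^sub>v ?v = A *\<^sub>v unit_vec nc i - A *\<^sub>v unit_vec nc j"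
        using A by (simp add: mult_minus_distrib_mat_vec)
      also have "\<dots> = 0\<^sub>v n" using eq i j A i' j' by (simp add: mult_unit_col)
      finally have "A *\<^sub>v ?v = 0\<^sub>v n" .
      hence "?v = 0\<^sub>v nc" using ker[of ?v] by simp
      hence "?v $ i = 0" using i' by simp
      thus False using i' j' ij by simp
    qed
  qed
  have "\<not> module.lin_dep class_ring (module_vec TYPE(complex) n) (set (cols A))"
  proof
    assume "module.lin_dep class_ring (module_vec TYPE(complex) n) (set (cols A))"
    then obtain v where "v \<in> carrier_vec nc" "v \<noteq> 0\<^sub>v nc" "A *\<^sub>v v = 0\<^sub>v n"
      using vec_space.lin_depE[OF A _ dist] by blast
    thus False using ker by blast
  qed
  thus ?thesis using vec_space.lin_indpt_full_rank[OF A dist] by blast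
qed



lemma pderiv_root_nonzero:
  fixes r :: "nat \<Rightarrow> complex"
  assumes dist: "\<And>i j. i \<in> S \<Longrightarrow> j \<in> S \<Longrightarrow> i \<noteq> j \<Longrightarrow> r i \<noteq> r j"
    and S: "finite S" and i: "i \<in> S"
  shows "poly (pderiv (\<Prod>j\<in>S. [:- r j, 1:])) (r i) \<noteq> 0"
proof -
  let ?H = "\<Prod>j\<in>S - {i}. [:- r j, 1:]"
  have "(\<Prod>j\<in>S. [:- r j, 1:]) = [:- r i, 1:] * ?H"
    using S i by (simp add: prod.remove)
  moreover have "pderiv ([:- r i, 1:] * ?H) = [:- r i, 1:] * pderiv ?H + ?H * pderiv [:- r i, 1:]"
    by (rule pderiv_mult)
  moreover have "pderiv [:- r i, 1:] = 1" by (simp add: pderiv_pCons)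
  ultimately have "pderiv (\<Prod>j\<in>S. [:- r j, 1:]) = [:- r i, 1:] * pderiv ?H + ?H"
    by (simp only: mult_1_right)
  hence "poly (pderiv (\<Prod>j\<in>S. [:- r j, 1:])) (r i) = poly ?H (r i)"
    by simp
  also have "\<dots> = (\<Prod>j\<in>S - {i}. r i - r j)" by (simp add: poly_prod)
  also have "\<dots> \<noteq> 0"
  proof -
    have "\<forall>j\<in>S - {i}. r i - r j \<noteq> 0"
    proof
      fix j assume j: "j \<in> S - {i}"
      show "r i - r j \<noteq> 0" using dist[of i j] i j by simp
    qed
    thus ?thesis using S by (simp add: prod_zero_iff)
  qed
  finally show ?thesis .
qed

lemma Q_zero:
  fixes r :: "nat \<Rightarrow> complex" and d :: nat
  assumes dist: "\<And>i j. i \<in> {1..d} \<Longrightarrow> j \<in> {1..d} \<Longrightarrow> i \<noteq> j \<Longrightarrow> r i \<noteq> r j"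
    and F: "F = (\<Prod>j\<in>{1..d}. [:- r j, 1:])"
    and eq: "(pderiv F)\<^sup>2 * Q = F * S"
    and deg: "degree Q < d"
  shows "Q = 0"
proof (rule poly_eqI_degree[of "r ` {1..d}"])
  fix x assume "x \<in> r ` {1..d}"
  then obtain i where i: "i \<in> {1..d}" and x: "x = r i" by auto
  have "poly F x = 0" unfolding F x poly_prod using i by (intro prod_zero) auto
  hence "poly ((pderiv F)\<^sup>2 * Q) x = 0" using eq by simp
  moreover have "poly (pderiv F) x \<noteq> 0" unfolding F x
    by (rule pderiv_root_nonzero[OF dist]) (use i in auto)
  ultimately show "poly Q x = poly 0 x" by simp
next
  have "inj_on r {1..d}" by (rule inj_onI) (meson dist)
  hence "card (r ` {1..d}) = d" by (simp add: card_image)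
  thus "degree Q < card (r ` {1..d})" "degree 0 < card (r ` {1..d})" using deg by auto
qed

lemma degree_Fpoly: "degree (Fpoly d c) \<le> d"
  unfolding Fpoly_def by (rule degree_sum_le) (auto intro: order.trans[OF degree_monom_le])

lemma coeff_Fpoly_d: "coeff (Fpoly d c) d = c 0"
proof -
  have "coeff (Fpoly d c) d = (\<Sum>i\<le>d. if i = 0 then c i else 0)"
    unfolding Fpoly_def coeff_sum by (intro sum.cong) (auto simp: coeff_monom)
  thus ?thesis by simp
qed

lemma poly_Fpoly: "poly (Fpoly d c) p = (\<Sum>i\<le>d. c i * p ^ (d - i))"
  unfolding Fpoly_def by (simp add: poly_sum poly_monom)

lemma dim_MF: "dim_row (MF d c) = 2*d-4+d+1" "dim_col (MF d c) = 2*d-4+1"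
  unfolding MF_def Mmat_def by (rule dim_row_mat dim_col_mat)+

lemma lowerMF_carrier: assumes d: "d \<ge> 3" shows "lower d (MF d c) \<in> carrier_mat (2*d-3) (2*d-3)"
proof -
  have e: "2*d-4+1 = 2*d-3" using d by arith
  show ?thesis unfolding lower_def dim_MF(2) e by (rule mat_carrier)
qed


lemma Mmat_entry: "i < h+k+1 \<Longrightarrow> j < h+1 \<Longrightarrow>
   Mmat k h P $$ (i,j) = (if j \<le> i \<and> i - j \<le> k then coeff P (i - j) else 0)"
  unfolding Mmat_def by (rule index_mat(1)[THEN trans]) auto

lemma lower_entry: "i < 2*d-3 \<Longrightarrow> j < dim_col X \<Longrightarrow> lower d X $$ (i,j) = X $$ (i+d, j)"
  unfolding lower_def by (rule index_mat(1)[THEN trans]) auto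

lemma lowerMF_entry: assumes d: "d \<ge> 3" and i: "i < 2*d-3" and j: "j < 2*d-3"
  shows "lower d (MF d c) $$ (i,j) = (if j \<le> i + d \<and> i + d - j \<le> d then coeff (Fpoly d c) (i + d - j) else 0)"
proof -
  have j': "j < dim_col (MF d c)" using dim_MF(2)[of d c] j d by linarith
  have i2: "i + d < 2*d-4+d+1" "j < 2*d-4+1" using i j d by linarith+
  show ?thesis unfolding lower_entry[OF i j'] unfolding MF_def by (rule Mmat_entry[OF i2])
qed

lemma lowerMF_det: assumes d: "d \<ge> 3" and c0: "c 0 = 1"
  shows "det (lower d (MF d c)) = 1"
proof -
  have C: "lower d (MF d c) \<in> carrier_mat (2*d-3) (2*d-3)" by (rule lowerMF_carrier[OF d])
  have ut: "upper_triangular (lower d (MF d c))"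
    unfolding upper_triangular_def
  proof (intro allI impI)
    fix i j assume i: "i < dim_row (lower d (MF d c))" and j: "j < i"
    have i': "i < 2*d-3" using i C by simp
    have j': "j < 2*d-3" using i' j by linarith
    have "\<not> (i + d - j \<le> d)" using j by linarith
    thus "lower d (MF d c) $$ (i, j) = 0" unfolding lowerMF_entry[OF d i' j'] by simp
  qed
  have "det (lower d (MF d c)) = prod_list (diag_mat (lower d (MF d c)))"
    by (rule det_upper_triangular[OF ut C])
  also have "\<dots> = (\<Prod>i = 0..<2*d-3. lower d (MF d c) $$ (i,i))"
    unfolding prod_list_diag_prod using C by simp
  also have "\<dots> = (\<Prod>i = 0..<2*d-3. 1)"
  proof (intro prod.cong refl)
    fix i assume "i \<in> {0..<2*d-3}"
    hence i: "i < 2*d-3" by simp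
    show "lower d (MF d c) $$ (i,i) = 1" unfolding lowerMF_entry[OF d i i] by (simp add: coeff_Fpoly_d c0)
  qed
  finally show ?thesis by simp
qed


lemma upper_carrier: "A \<in> carrier_mat m n \<Longrightarrow> upper d A \<in> carrier_mat d n"
  unfolding upper_def by auto

lemma lower_carrier: "A \<in> carrier_mat m n \<Longrightarrow> lower d A \<in> carrier_mat (2*d-3) n"
  unfolding lower_def by auto

lemma main_pointwise:
  fixes d :: nat and c r :: "nat \<Rightarrow> complex"
  assumes d: "d \<ge> 3" and c0: "c 0 = 1"
    and dist: "\<And>i j. i \<in> {1..d} \<Longrightarrow> j \<in> {1..d} \<Longrightarrow> i \<noteq> j \<Longrightarrow> r i \<noteq> r j"
    and Fe: "Fpoly d c = (\<Prod>j\<in>{1..d}. [:- r j, 1:])"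
  shows "dim_row (Bmat d c) = d \<and> dim_col (Bmat d c) = d - 1 \<and> vec_space.rank d (Bmat d c) = d - 1"
proof -
  define F where "F = Fpoly d c"
  define G where "G = (pderiv F)\<^sup>2"
  define MFm where "MFm = MF d c"
  define MG where "MG = MFp2 d c"
  define LF where "LF = lower d MFm"
  define LG where "LG = lower d MG"
  define UF where "UF = upper d MFm"
  define UG where "UG = upper d MG"
  have e1: "2*d-4+d+1 = 3*d-3" "2*d-4+1 = 2*d-3" "d-2+(2*d-2)+1 = 3*d-3" "d-2+1 = d-1"
    using d by linarith+
  have degF: "degree F \<le> d" unfolding F_def by (rule degree_Fpoly)
  have degG: "degree G \<le> 2*d-2"
  proof -
    have "degree G \<le> 2 * degree (pderiv F)" unfolding G_def using degree_power_le[of "pderiv F" 2] by (simp add: mult.commute)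
    also have "degree (pderiv F) = degree F - 1" by (rule degree_pderiv)
    finally show ?thesis using degF by linarith
  qed
  have MFc: "MFm \<in> carrier_mat (3*d-3) (2*d-3)"
    using Mmat_carrier[of d "2*d-4" F] unfolding MFm_def MF_def F_def e1 .
  have MGc: "MG \<in> carrier_mat (3*d-3) (d-1)"
    using Mmat_carrier[of "2*d-2" "d-2" G] unfolding MG_def MFp2_def G_def F_def e1 .
  have LFc: "LF \<in> carrier_mat (2*d-3) (2*d-3)" unfolding LF_def by (rule lower_carrier[OF MFc])
  have LGc: "LG \<in> carrier_mat (2*d-3) (d-1)" unfolding LG_def by (rule lower_carrier[OF MGc])
  have UFc: "UF \<in> carrier_mat d (2*d-3)" unfolding UF_def by (rule upper_carrier[OF MFc])
  have UGc: "UG \<in> carrier_mat d (d-1)" unfolding UG_def by (rule upper_carrier[OF MGc])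
  have "det LF = 1" unfolding LF_def MFm_def by (rule lowerMF_det[of d c, OF d c0])
  hence unit: "LF \<in> Units (ring_mat TYPE(complex) (2*d-3) ())"
    by (intro det_non_zero_imp_unit[OF LFc]) simp
  obtain X where X: "mat_inverse LF = Some X"
    using mat_inverse(1)[OF LFc, of "()"] unit by (cases "mat_inverse LF") auto
  from mat_inverse(2)[OF LFc X] have LFX: "LF * X = 1\<^sub>m (2*d-3)" and Xc: "X \<in> carrier_mat (2*d-3) (2*d-3)"
    by auto
  have Bdef: "Bmat d c = UG - UF * X * LG"
    using X unfolding Bmat_def UG_def UF_def LG_def MG_def MFm_def LF_def by simp
  have Bc: "Bmat d c \<in> carrier_mat d (d-1)"
    unfolding Bdef using UFc Xc LGc by (intro minus_carrier_mat mult_carrier_mat)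
  have ker: "v = 0\<^sub>v (d-1)" if v: "v \<in> carrier_vec (d-1)" and Bv: "Bmat d c *\<^sub>v v = 0\<^sub>v d" for v
  proof -
    define s where "s = X *\<^sub>v (LG *\<^sub>v v)"
    have sc: "s \<in> carrier_vec (2*d-3)" unfolding s_def using Xc LGc v by simp
    have "Bmat d c *\<^sub>v v = UG *\<^sub>v v - (UF * X * LG) *\<^sub>v v"
      unfolding Bdef using UGc UFc Xc LGc v by (intro minus_mult_distrib_mat_vec) auto
    also have "(UF * X * LG) *\<^sub>v v = UF *\<^sub>v s"
    proof -
      have "(UF * X * LG) *\<^sub>v v = (UF * X) *\<^sub>v (LG *\<^sub>v v)"
        by (rule assoc_mult_mat_vec[of _ d "2*d-3" _ "d-1"]) (use UFc Xc LGc v in auto)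
      also have "\<dots> = UF *\<^sub>v s" unfolding s_def
        by (rule assoc_mult_mat_vec[of _ d "2*d-3" _ "2*d-3"]) (use UFc Xc LGc v in auto)
      finally show ?thesis .
    qed
    finally have B2: "UG *\<^sub>v v - UF *\<^sub>v s = 0\<^sub>v d" using Bv by simp
    have up: "(UG *\<^sub>v v) $ i = (UF *\<^sub>v s) $ i" if i: "i < d" for i
    proof -
      have "(UG *\<^sub>v v - UF *\<^sub>v s) $ i = 0" using B2 i by simp
      thus ?thesis using i UFc sc by simp
    qed
    have lo: "LF *\<^sub>v s = LG *\<^sub>v v"
    proof -
      have "LF *\<^sub>v s = (LF * X) *\<^sub>v (LG *\<^sub>v v)" unfolding s_def using LFc Xc LGc v by simp
      also have "\<dots> = LG *\<^sub>v v" unfolding LFX using LGc v by simp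
      finally show ?thesis .
    qed
    define Q where "Q = pv (d-2+1) v"
    define S where "S = pv (2*d-4+1) s"
    have v': "v \<in> carrier_vec (d-2+1)" using v e1 by simp
    have s': "s \<in> carrier_vec (2*d-4+1)" using sc e1 by simp
    have MGv: "MG *\<^sub>v v = vec (3*d-3) (\<lambda>i. coeff (G * Q) i)"
      using Mmat_mult[OF degG v'] unfolding MG_def MFp2_def Q_def G_def F_def e1 .
    have MFs: "MFm *\<^sub>v s = vec (3*d-3) (\<lambda>i. coeff (F * S) i)"
      using Mmat_mult[OF degF s'] unfolding MFm_def MF_def S_def F_def e1 .
    have degQ: "degree Q \<le> d-2" unfolding Q_def using degree_pv[of "d-2" v] by simp
    have degS: "degree S \<le> 2*d-4" unfolding S_def using degree_pv[of "2*d-4" s] by simp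
    have "G * Q = F * S"
    proof (rule poly_eqI)
      fix i
      show "coeff (G * Q) i = coeff (F * S) i"
      proof (cases "i < d")
        case True
        have "coeff (G * Q) i = (MG *\<^sub>v v) $ i" unfolding MGv using True d by simp
        also have "\<dots> = (UG *\<^sub>v v) $ i" unfolding UG_def
          by (rule upper_mult[OF MGc _ v True, symmetric]) (use d in linarith)
        also have "\<dots> = (UF *\<^sub>v s) $ i" by (rule up[OF True])
        also have "\<dots> = (MFm *\<^sub>v s) $ i" unfolding UF_def
          by (rule upper_mult[OF MFc _ sc True]) (use d in linarith)
        also have "\<dots> = coeff (F * S) i" unfolding MFs using True d by simp
        finally show ?thesis .
      next
        case False
        show ?thesis
        proof (cases "i < 3*d-3")
          case True
          define i' where "i' = i - d"
          have ii: "i = i' + d" "i' < 2*d-3" using False True d unfolding i'_def by linarith+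
          have "coeff (G * Q) i = (MG *\<^sub>v v) $ (i' + d)" unfolding MGv using True ii by simp
          also have "\<dots> = (LG *\<^sub>v v) $ i'" unfolding LG_def
            by (rule lower_mult[OF MGc v ii(2), symmetric]) (use d in linarith)
          also have "\<dots> = (LF *\<^sub>v s) $ i'" using lo by simp
          also have "\<dots> = (MFm *\<^sub>v s) $ (i' + d)" unfolding LF_def
            by (rule lower_mult[OF MFc sc ii(2)]) (use d in linarith)
          also have "\<dots> = coeff (F * S) i" unfolding MFs using True ii by simp
          finally show ?thesis .
        next
          case False
          have "degree (G * Q) \<le> degree G + degree Q" by (rule degree_mult_le)
          hence a: "degree (G * Q) < i" using degG degQ False d by linarith
          have "degree (F * S) \<le> degree F + degree S" by (rule degree_mult_le)
          hence b: "degree (F * S) < i" using degF degS False d by linarith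
          show ?thesis using coeff_eq_0[OF a] coeff_eq_0[OF b] by simp
        qed
      qed
    qed
    hence "(pderiv F)\<^sup>2 * Q = F * S" unfolding G_def .
    moreover have "degree Q < d" using degQ d by linarith
    ultimately have Q0: "Q = 0" using Q_zero[OF dist Fe[folded F_def]] by blast
    show "v = 0\<^sub>v (d-1)"
    proof (rule eq_vecI)
      show "dim_vec v = dim_vec (0\<^sub>v (d-1))" using v by simp
      fix j assume "j < dim_vec (0\<^sub>v (d-1))"
      hence j: "j < d-2+1" using e1 by simp
      have "v $ j = coeff Q j" unfolding Q_def coeff_pv using j by simp
      thus "v $ j = 0\<^sub>v (d-1) $ j" using Q0 j e1 by simp
    qed
  qed
  have "vec_space.rank d (Bmat d c) = d - 1"
    by (rule rank_of_trivial_kernel[OF Bc ker])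
  thus ?thesis using Bc by simp
qed

theorem lemma2:
  fixes d :: nat and U :: "(complex \<times> complex) set"
    and a :: "nat \<Rightarrow> complex \<times> complex \<Rightarrow> complex"
    and r :: "nat \<Rightarrow> complex \<times> complex \<Rightarrow> complex"
  assumes d: "d \<ge> 3"
    and U: "open U"
    and holo_a: "\<And>i. i \<le> d \<Longrightarrow> holo2 U (a i)"
    and a0: "\<And>z. z \<in> U \<Longrightarrow> a 0 z = 1"
    and holo_r: "\<And>i. i \<in> {1..d} \<Longrightarrow> holo2 U (r i)"
    and distinct: "\<And>z i j. z \<in> U \<Longrightarrow> i \<in> {1..d} \<Longrightarrow> j \<in> {1..d} \<Longrightarrow> i \<noteq> j \<Longrightarrow> r i z \<noteq> r j z"
    and factor: "\<And>z p. z \<in> U \<Longrightarrow>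
       (\<Sum>i\<le>d. a i z * p ^ (d - i)) = (\<Prod>i\<in>{1..d}. p - r i z)"
  shows "\<forall>z\<in>U. dim_row (Bmat d (\<lambda>i. a i z)) = d
              \<and> dim_col (Bmat d (\<lambda>i. a i z)) = d - 1
              \<and> vec_space.rank d (Bmat d (\<lambda>i. a i z)) = d - 1"
  proof
  fix z assume z: "z \<in> U"
  have F: "Fpoly d (\<lambda>i. a i z) = (\<Prod>j\<in>{1..d}. [:- r j z, 1:])"
  proof (rule poly_ext)
    fix p
    show "poly (Fpoly d (\<lambda>i. a i z)) p = poly (\<Prod>j\<in>{1..d}. [:- r j z, 1:]) p"
      unfolding poly_Fpoly poly_prod factor[OF z] by simp
  qed
  show "dim_row (Bmat d (\<lambda>i. a i z)) = d \<and> dim_col (Bmat d (\<lambda>i. a i z)) = d - 1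
              \<and> vec_space.rank d (Bmat d (\<lambda>i. a i z)) = d - 1"
    by (rule main_pointwise[OF d _ _ F]) (auto simp: a0[OF z] distinct[OF z])
qed

end
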